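(* Assume $\sigma_1(x)=\tfrac12\sigma_1''(0)(x-a_1)(x-b_1)$ and $\sigma_2(x)=\tfrac12\sigma_2''(0)(x-a_2)(x-b_2)$ with $\sigma_1''(0)\ne0$, $\sigma_2''(0)\ne0$ and real zeros satisfying $a_2<a_1<0<b_1<b_2$, and assume $0<q^2\Lambda_q<1$, where $\Lambda_q=q^{-2}\Big[1+\frac{(1-q^{-1})\tau'(0)}{\frac12\sigma_1''(0)}\Big]$. Put $a=a_1$, $b=b_1$ and $$\rho(x)=\frac{(qx/a,\,qx/b;q)_\infty}{(x/a_2,\,x/b_2;q)_\infty}.$$ Then there exist polynomials $P_n$, $n\in\mathbb{N}_0$, with $P_n$ of degree $n$ a solution of the q-EHT with $\lambda=\lambda_n$, and nonzero constants $d_n^2$, such that for all $m,n\in\mathbb{N}_0$ $$\int_a^b P_n(x)P_m(x)\rho(x)\,d_qx=d_n^2\delta_{mn},$$ i.e. orthogonality with respect to $\rho$ supported on $\{q^ka\}_{k\in\mathbb{N}_0}\cup\{q^kb\}_{k\in\mathbb{N}_0}$.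
   Context: Throughout $0<q<1$. For a function $y$ and $\zeta\in\{q,q^{-1}\}$, $D_\zeta y(x)=\frac{y(x)-y(\zeta x)}{(1-\zeta)x}$ for $x\ne0$ and $D_\zeta y(0)=y'(0)$; $[n]_q=\frac{1-q^n}{1-q}$. Let $\sigma_1$ be a real polynomial of degree at most two, $\tau(x)=\tau'(0)x+\tau(0)$ a real polynomial with $\tau'(0)\ne0$, and $\sigma_2(x):=q[\sigma_1(x)+(1-q^{-1})x\tau(x)]$. The q-EHT with parameter $n$ is $\sigma_1(x)D_{q^{-1}}D_qy(x)+\tau(x)D_qy(x)+\lambda_ny(x)=0$, $\lambda_n=-[n]_q\big(\tau'(0)+\tfrac12[n-1]_{q^{-1}}\sigma_1''(0)\big)$. $(\alpha;q)_\infty=\prod_{k\ge0}(1-\alpha q^k)$, $(\alpha_1,\dots,\alpha_r;q)_\infty=\prod_i(\alpha_i;q)_\infty$. For $a<0<b$, $\int_a^b f(x)\,d_qx=(1-q)b\sum_{j\ge0}q^jf(q^jb)+(1-q)(-a)\sum_{j\ge0}q^jf(q^ja)$. *)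

theory Defs
  imports "HOL-Analysis.Analysis" "HOL-Computational_Algebra.Polynomial"
begin

definition qD :: "real \<Rightarrow> (real \<Rightarrow> real) \<Rightarrow> real \<Rightarrow> real" where
  "qD \<zeta> y x = (if x = 0 then deriv y 0 else (y x - y (\<zeta> * x)) / ((1 - \<zeta>) * x))"

definition qnum :: "real \<Rightarrow> int \<Rightarrow> real" where
  "qnum q k = (1 - q powi k) / (1 - q)"

definition qpoch_inf :: "real \<Rightarrow> real \<Rightarrow> real" where
  "qpoch_inf q \<alpha> = (\<Prod>k. 1 - \<alpha> * q ^ k)"

text \<open>Jackson integral over [a,b] with a < 0 < b.\<close>
definition jackson_int :: "real \<Rightarrow> real \<Rightarrow> real \<Rightarrow> (real \<Rightarrow> real) \<Rightarrow> real" where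
  "jackson_int q a b f =
     (1 - q) * b * (\<Sum>j. q ^ j * f (q ^ j * b)) + (1 - q) * (- a) * (\<Sum>j. q ^ j * f (q ^ j * a))"

definition sigma2 :: "real \<Rightarrow> real poly \<Rightarrow> real poly \<Rightarrow> real poly" where
  "sigma2 q \<sigma>1 \<tau> = smult q (\<sigma>1 + [:0, 1 - 1 / q:] * \<tau>)"

definition dd0 :: "real poly \<Rightarrow> real" where
  "dd0 p = poly (pderiv (pderiv p)) 0"

definition qEHT_lambda :: "real \<Rightarrow> real poly \<Rightarrow> real poly \<Rightarrow> nat \<Rightarrow> real" where
  "qEHT_lambda q \<sigma>1 \<tau> n =
     - qnum q (int n) * (poly (pderiv \<tau>) 0 + 1 / 2 * qnum (1 / q) (int n - 1) * dd0 \<sigma>1)"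

definition solves_qEHT :: "real \<Rightarrow> real poly \<Rightarrow> real poly \<Rightarrow> real \<Rightarrow> (real \<Rightarrow> real) \<Rightarrow> bool" where
  "solves_qEHT q \<sigma>1 \<tau> lam y \<longleftrightarrow>
     (\<forall>x. poly \<sigma>1 x * qD (1 / q) (qD q y) x + poly \<tau> x * qD q y x + lam * y x = 0)"

end

theory Submission
  imports Defs
begin

lemma qp_conv:
  assumes q: "0 < q" "q < (1::real)"
  shows "convergent_prod (\<lambda>k. 1 - \<alpha> * q ^ k)"
proof -
  have "summable (\<lambda>k. norm ((1 - \<alpha> * q ^ k) - 1))"
    using q by (simp add: abs_mult power_abs summable_geometric)
  then show ?thesis
    by (intro abs_convergent_prod_imp_convergent_prod summable_imp_abs_convergent_prod)
qed

lemma qp_rec: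
  assumes q: "0 < q" "q < (1::real)"
  shows "qpoch_inf q \<alpha> = (1 - \<alpha>) * qpoch_inf q (q * \<alpha>)"
proof -
  have "(\<lambda>k. 1 - \<alpha> * q ^ k) has_prod ((\<Prod>k<1. 1 - \<alpha> * q ^ k) * (\<Prod>k. 1 - \<alpha> * q ^ (k + 1)))"
    by (rule has_prod_ignore_initial_segment'[OF qp_conv[OF q]])
  moreover have "(\<lambda>k. 1 - \<alpha> * q ^ (k + 1)) = (\<lambda>k. 1 - q * \<alpha> * q ^ k)"
    by (simp add: fun_eq_iff algebra_simps)
  ultimately have "(\<lambda>k. 1 - \<alpha> * q ^ k) has_prod ((1 - \<alpha>) * qpoch_inf q (q * \<alpha>))"
    by (simp add: qpoch_inf_def)
  then show ?thesis
    unfolding qpoch_inf_def by (rule has_prod_unique[symmetric])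
qed

lemma qp_pos:
  assumes q: "0 < q" "q < (1::real)" and a: "\<alpha> < 1"
  shows "qpoch_inf q \<alpha> > 0"
proof -
  have pos: "1 - \<alpha> * q ^ k > 0" for k
  proof (cases "\<alpha> \<le> 0")
    case True
    have "\<alpha> * q ^ k \<le> 0" using True q by (simp add: mult_nonpos_nonneg)
    then show ?thesis by simp
  next
    case False
    have "q ^ k \<le> 1" using q by (simp add: power_le_one)
    then have "\<alpha> * q ^ k \<le> \<alpha>" using False by (simp add: mult_left_le)
    then show ?thesis using a by simp
  qed
  have "qpoch_inf q \<alpha> \<noteq> 0" unfolding qpoch_inf_def
    using prodinf_nonzero[OF qp_conv[OF q]] pos by (metis less_irrefl)
  moreover have "qpoch_inf q \<alpha> \<ge> 0" unfolding qpoch_inf_def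
    using has_prod_nonneg[OF convergent_prod_has_prod[OF qp_conv[OF q]]] pos less_imp_le by blast
  ultimately show ?thesis by simp
qed

lemma qp_lim:
  assumes q: "0 < q" "q < (1::real)" and a: "\<alpha> < 1"
  shows "(\<lambda>N. qpoch_inf q (\<alpha> * q ^ N)) \<longlonglongrightarrow> 1"
proof -
  define f where "f = (\<lambda>k. 1 - \<alpha> * q ^ k)"
  have P: "prodinf f > 0" using qp_pos[OF q a] by (simp add: f_def qpoch_inf_def)
  have nz: "f i \<noteq> 0" for i
  proof -
    have "prodinf f \<noteq> 0" using P by simp
    then show ?thesis
      using has_prod_nonzero[OF convergent_prod_has_prod[OF qp_conv[OF q]]] by (simp add: f_def)
  qed
  have eq: "qpoch_inf q (\<alpha> * q ^ N) = prodinf f / (\<Prod>i<N. f i)" for N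
  proof -
    have "(\<lambda>i. f (i + N)) = (\<lambda>k. 1 - \<alpha> * q ^ N * q ^ k)"
      by (simp add: f_def fun_eq_iff power_add algebra_simps)
    then show ?thesis
      using prodinf_divide_initial_segment[of f N] qp_conv[OF q] nz
      by (simp add: qpoch_inf_def f_def)
  qed
  have "(\<lambda>N. \<Prod>i<N. f i) \<longlonglongrightarrow> prodinf f"
    unfolding f_def by (rule has_prod_imp_tendsto'[OF convergent_prod_has_prod[OF qp_conv[OF q]]])
  then have "(\<lambda>N. prodinf f / (\<Prod>i<N. f i)) \<longlonglongrightarrow> prodinf f / prodinf f"
    using P by (intro tendsto_divide tendsto_const) auto
  then show ?thesis using P by (simp add: eq)
qed

definition qn :: "real \<Rightarrow> nat \<Rightarrow> real" where
  "qn z n = (1 - z ^ n) / (1 - z)"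

lemma qnum_nat: "qnum z (int n) = qn z n"
  unfolding qnum_def qn_def by simp

definition Dqp :: "real \<Rightarrow> real poly \<Rightarrow> real poly" where
  "Dqp z p = Abs_poly (\<lambda>j. coeff p (Suc j) * qn z (Suc j))"

lemma coeff_Dqp: "coeff (Dqp z p) j = coeff p (Suc j) * qn z (Suc j)"
proof -
  have "coeff (Abs_poly (\<lambda>j. coeff p (Suc j) * qn z (Suc j))) = (\<lambda>j. coeff p (Suc j) * qn z (Suc j))"
    by (rule coeff_Abs_poly[where n="degree p"]) (simp add: coeff_eq_0)
  then show ?thesis by (simp add: Dqp_def)
qed

lemma qn_Suc: "z \<noteq> 1 \<Longrightarrow> qn z (Suc j) = 1 + z * qn z j"
  unfolding qn_def by (simp add: field_simps)

lemma qn_0[simp]: "qn z 0 = 0" unfolding qn_def by simp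

lemma qn_1: "z \<noteq> 1 \<Longrightarrow> qn z (Suc 0) = 1" unfolding qn_def by simp

lemma Dqp_0[simp]: "Dqp z 0 = 0"
  by (simp add: poly_eq_iff coeff_Dqp)

lemma Dqp_add: "Dqp z (p + r) = Dqp z p + Dqp z r"
  by (simp add: poly_eq_iff coeff_Dqp algebra_simps)

lemma Dqp_pCons: "z \<noteq> 1 \<Longrightarrow> Dqp z (pCons c r) = r + smult z (pCons 0 (Dqp z r))"
  by (auto simp add: poly_eq_iff coeff_Dqp coeff_pCons qn_Suc algebra_simps split: nat.split)

lemma poly_Dqp: "z \<noteq> 1 \<Longrightarrow> (1 - z) * x * poly (Dqp z p) x = poly p x - poly p (z * x)"
proof (induction p rule: pCons_induct)
  case 0 then show ?case by simp
next
  case (pCons c r)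
  have "(1 - z) * x * poly (Dqp z (pCons c r)) x = (1 - z) * x * poly r x + z * x * ((1 - z) * x * poly (Dqp z r) x)"
    using pCons by (simp add: Dqp_pCons algebra_simps)
  also have "\<dots> = (1 - z) * x * poly r x + z * x * (poly r x - poly r (z * x))"
    using pCons by simp
  finally show ?case by (simp add: algebra_simps)
qed

lemma poly_Dqp': "z \<noteq> 1 \<Longrightarrow> x \<noteq> 0 \<Longrightarrow> poly (Dqp z p) x = (poly p x - poly p (z * x)) / ((1 - z) * x)"
  using poly_Dqp[of z x p] by (simp add: field_simps)

lemma qD_poly: "z \<noteq> 1 \<Longrightarrow> qD z (poly p) = poly (Dqp z p)"
proof
  fix x assume z: "z \<noteq> 1"
  show "qD z (poly p) x = poly (Dqp z p) x"
  proof (cases "x = 0")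
    case True
    have "deriv (poly p) 0 = poly (pderiv p) 0"
      by (rule DERIV_imp_deriv[OF poly_DERIV])
    then show ?thesis using True z
      by (simp add: qD_def poly_0_coeff_0 coeff_pderiv coeff_Dqp qn_1)
  next
    case False
    then show ?thesis using z by (simp add: qD_def poly_Dqp')
  qed
qed

definition Lop :: "real \<Rightarrow> real poly \<Rightarrow> real poly \<Rightarrow> real poly \<Rightarrow> real poly" where
  "Lop q s t p = s * Dqp (1/q) (Dqp q p) + t * Dqp q p"

lemma Lop_add: "Lop q s t (p + r) = Lop q s t p + Lop q s t r"
  by (simp add: Lop_def Dqp_add algebra_simps)

lemma Lop_0[simp]: "Lop q s t 0 = 0" by (simp add: Lop_def)

lemma coeff_Lop:
  "coeff (Lop q [:s0, s1, s2:] [:t0, t1:] p) i =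
     s0 * (coeff p (i+2) * qn q (i+2) * qn (1/q) (i+1))
   + s1 * (if i = 0 then 0 else coeff p (i+1) * qn q (i+1) * qn (1/q) i)
   + s2 * (if i < 2 then 0 else coeff p i * qn q i * qn (1/q) (i - 1))
   + t0 * (coeff p (i+1) * qn q (i+1))
   + t1 * (if i = 0 then 0 else coeff p i * qn q i)"
proof (cases i)
  case 0 then show ?thesis by (simp add: Lop_def mult_pCons_left coeff_Dqp numeral_2_eq_2)
next
  case (Suc j)
  then show ?thesis
  proof (cases j)
    case 0 then show ?thesis using Suc by (simp add: Lop_def mult_pCons_left coeff_Dqp numeral_2_eq_2)
  next
    case (Suc k)
    then show ?thesis using \<open>i = Suc j\<close>
      by (simp add: Lop_def mult_pCons_left coeff_Dqp numeral_2_eq_2 algebra_simps)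
  qed
qed

definition mu :: "real \<Rightarrow> real \<Rightarrow> real \<Rightarrow> nat \<Rightarrow> real" where
  "mu q sC tB k = sC * qn q k * qn (1/q) (k - 1) + tB * qn q k"

lemma Lop_T1:
  assumes "\<forall>i\<ge>k. coeff p i = 0" "i \<ge> k"
  shows "coeff (Lop q [:sA, sB, sC:] [:tA, tB:] p) i = 0"
  using assms by (simp add: coeff_Lop)

lemma Lop_T2:
  assumes "\<forall>i>k. coeff p i = 0"
  shows "coeff (Lop q [:sA, sB, sC:] [:tA, tB:] p) k = mu q sC tB k * coeff p k"
proof -
  consider "k = 0" | "k = 1" | "k \<ge> 2" by linarith
  then show ?thesis
    by cases (use assms in \<open>auto simp: coeff_Lop mu_def algebra_simps\<close>)
qed

lemma solve_lemma:
  fixes q sA sB sC tA tB :: real and n :: nat and L defines "L \<equiv> Lop q [:sA, sB, sC:] [:tA, tB:]"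
  assumes "\<forall>j<k. mu q sC tB j \<noteq> mu q sC tB n"
  shows "\<forall>r. (\<forall>i\<ge>k. coeff r i = 0) \<longrightarrow>
            (\<exists>p. (\<forall>i\<ge>k. coeff p i = 0) \<and> L p - smult (mu q sC tB n) p = r)"
  using assms(2)
proof (induction k)
  case 0
  show ?case
  proof (intro allI impI)
    fix r :: "real poly" assume "\<forall>i\<ge>0. coeff r i = 0"
    then have "r = 0" by (simp add: poly_eq_iff)
    then show "\<exists>p. (\<forall>i\<ge>0. coeff p i = 0) \<and> L p - smult (mu q sC tB n) p = r"
      by (intro exI[of _ 0]) (simp add: L_def)
  qed
next
  case (Suc k)
  let ?m = "mu q sC tB n"
  show ?case
  proof (intro allI impI)
    fix r :: "real poly" assume r: "\<forall>i\<ge>Suc k. coeff r i = 0"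
    have ne: "mu q sC tB k \<noteq> ?m" using Suc.prems by simp
    define c where "c = coeff r k / (mu q sC tB k - ?m)"
    define M where "M = L (monom c k) - smult ?m (monom c k)"
    have M1: "coeff M k = coeff r k"
      using Lop_T2[of k "monom c k" q sA sB sC tA tB] ne
      by (simp add: M_def L_def c_def coeff_monom field_simps)
    have M2: "coeff M i = 0" if "i > k" for i
      using Lop_T1[of "Suc k" "monom c k" i q sA sB sC tA tB] that
      by (simp add: M_def L_def coeff_monom)
    define r' where "r' = r - M"
    have "\<forall>i\<ge>k. coeff r' i = 0"
    proof (intro allI impI)
      fix i assume "k \<le> i"
      then consider "i = k" | "i > k" by linarith
      then show "coeff r' i = 0"
        by cases (use M1 M2 r in \<open>auto simp: r'_def\<close>)
    qed
    then obtain p' where p': "\<forall>i\<ge>k. coeff p' i = 0" "L p' - smult ?m p' = r'"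
      using Suc.IH Suc.prems by auto
    show "\<exists>p. (\<forall>i\<ge>Suc k. coeff p i = 0) \<and> L p - smult ?m p = r"
    proof (intro exI[of _ "p' + monom c k"] conjI)
      show "\<forall>i\<ge>Suc k. coeff (p' + monom c k) i = 0"
        using p'(1) by (simp add: coeff_monom)
      have "L (p' + monom c k) - smult ?m (p' + monom c k) = (L p' - smult ?m p') + M"
        by (simp add: L_def Lop_add M_def smult_add_right)
      then show "L (p' + monom c k) - smult ?m (p' + monom c k) = r"
        using p'(2) by (simp add: r'_def)
    qed
  qed
qed

lemma eigen_exists:
  fixes q sA sB sC tA tB :: real and n :: nat and L defines "L \<equiv> Lop q [:sA, sB, sC:] [:tA, tB:]"
  assumes "\<forall>j<n. mu q sC tB j \<noteq> mu q sC tB n"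
  shows "\<exists>P. degree P = n \<and> coeff P n = 1 \<and> L P = smult (mu q sC tB n) P"
proof -
  let ?m = "mu q sC tB n"
  define r where "r = - (L (monom 1 n) - smult ?m (monom 1 n))"
  have "\<forall>i\<ge>n. coeff r i = 0"
  proof (intro allI impI)
    fix i assume "n \<le> i"
    then consider "i = n" | "i > n" by linarith
    then show "coeff r i = 0"
    proof cases
      case 1 then show ?thesis
        using Lop_T2[of n "monom 1 n" q sA sB sC tA tB] by (simp add: r_def L_def coeff_monom)
    next
      case 2 then show ?thesis
        using Lop_T1[of "Suc n" "monom 1 n" i q sA sB sC tA tB] by (simp add: r_def L_def coeff_monom)
    qed
  qed
  then obtain p where p: "\<forall>i\<ge>n. coeff p i = 0" "L p - smult ?m p = r"
    using solve_lemma[where k=n and n=n and q=q and sA=sA and sB=sB and sC=sC and tA=tA and tB=tB] assms(2) unfolding L_def by blast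
  define P where "P = monom 1 n + p"
  have "L P - smult ?m P = (L (monom 1 n) - smult ?m (monom 1 n)) + (L p - smult ?m p)"
    by (simp add: P_def L_def Lop_add smult_add_right)
  then have "L P - smult ?m P = 0" using p(2) by (simp add: r_def)
  moreover have "degree P = n"
  proof (rule antisym)
    show "degree P \<le> n" using p(1) by (intro degree_le) (simp add: P_def coeff_monom)
    show "n \<le> degree P" using p(1) by (intro le_degree) (simp add: P_def coeff_monom)
  qed
  moreover have "coeff P n = 1" using p(1) by (simp add: P_def coeff_monom)
  ultimately show ?thesis by auto
qed

lemma pointwise_alg:
  fixes q x r s t s2x Hy gnx gny gmx gmy pnx pny pmx pmy mun mum :: real
  assumes q: "0 < q" "q < 1" and x: "x \<noteq> 0"
    and en: "s * ((gnx - gny) / ((1 - 1/q) * x)) + t * gnx = mun * pnx"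
    and em: "s * ((gmx - gmy) / ((1 - 1/q) * x)) + t * gmx = mum * pmx"
    and gny: "gny = (pny - pnx) / ((1 - q) * (x / q))"
    and gmy: "gmy = (pmy - pmx) / ((1 - q) * (x / q))"
    and pear: "r * s = Hy"
    and s2: "s2x = q * (s + (1 - 1/q) * x * t)"
  shows "(mun - mum) * r * ((1 - 1/q) * x) * pnx * pmx
         = r * s2x / q * (pmx * gnx - pnx * gmx) - Hy * (pmy * gny - pny * gmy)"
proof -
  have c0: "(1 - 1/q) * x \<noteq> 0" using q x by (simp add: field_simps)
  have Hx: "r * s2x / q = Hy + r * t * ((1 - 1/q) * x)"
    using q pear by (simp add: s2 field_simps)
  have En: "r * s2x / q * gnx - Hy * gny = mun * r * ((1 - 1/q) * x) * pnx"
  proof -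
    define d where "d = (gnx - gny) / ((1 - 1/q) * x)"
    have dd: "gnx - gny = ((1 - 1/q) * x) * d" using c0 by (simp add: d_def)
    have "r * s * (gnx - gny) + r * t * ((1 - 1/q) * x) * gnx = r * ((1 - 1/q) * x) * (s * d + t * gnx)"
      unfolding dd by (simp add: algebra_simps)
    also have "\<dots> = mun * r * ((1 - 1/q) * x) * pnx" using en by (simp add: d_def)
    finally have F: "r * s * (gnx - gny) + r * t * ((1 - 1/q) * x) * gnx = mun * r * ((1 - 1/q) * x) * pnx" .
    have "r * s2x / q * gnx - Hy * gny = r * s * (gnx - gny) + r * t * ((1 - 1/q) * x) * gnx"
      unfolding Hx pear[symmetric] by (simp add: algebra_simps)
    then show ?thesis using F by simp
  qed
  have Em: "r * s2x / q * gmx - Hy * gmy = mum * r * ((1 - 1/q) * x) * pmx"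
  proof -
    define d where "d = (gmx - gmy) / ((1 - 1/q) * x)"
    have dd: "gmx - gmy = ((1 - 1/q) * x) * d" using c0 by (simp add: d_def)
    have "r * s * (gmx - gmy) + r * t * ((1 - 1/q) * x) * gmx = r * ((1 - 1/q) * x) * (s * d + t * gmx)"
      unfolding dd by (simp add: algebra_simps)
    also have "\<dots> = mum * r * ((1 - 1/q) * x) * pmx" using em by (simp add: d_def)
    finally have F: "r * s * (gmx - gmy) + r * t * ((1 - 1/q) * x) * gmx = mum * r * ((1 - 1/q) * x) * pmx" .
    have "r * s2x / q * gmx - Hy * gmy = r * s * (gmx - gmy) + r * t * ((1 - 1/q) * x) * gmx"
      unfolding Hx pear[symmetric] by (simp add: algebra_simps)
    then show ?thesis using F by simp
  qed
  have cross: "pmx * gny - pnx * gmy = pmy * gny - pny * gmy"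
  proof -
    have "x - q * x \<noteq> 0" using q x by simp
    then show ?thesis unfolding gny gmy using q by (simp add: field_simps)
  qed
  have "(mun - mum) * r * ((1 - 1/q) * x) * pnx * pmx
        = pmx * (r * s2x / q * gnx - Hy * gny) - pnx * (r * s2x / q * gmx - Hy * gmy)"
    unfolding En Em by (simp add: algebra_simps)
  also have "\<dots> = r * s2x / q * (pmx * gnx - pnx * gmx) - Hy * (pmx * gny - pnx * gmy)"
    by (simp add: algebra_simps)
  finally show ?thesis unfolding cross .
qed

lemma tendsto_poly_qpow:
  assumes q: "0 < q" "q < (1::real)"
  shows "(\<lambda>j. poly p (q ^ j * c)) \<longlonglongrightarrow> poly p 0"
proof -
  have "(\<lambda>j. q ^ j * c) \<longlonglongrightarrow> 0 * c"
    by (intro tendsto_mult LIMSEQ_power_zero tendsto_const) (use q in auto)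
  then have "(\<lambda>j. q ^ j * c) \<longlonglongrightarrow> 0" by simp
  then show ?thesis
    by (rule isCont_tendsto_compose[OF poly_isCont])
qed

lemma side_sum:
  fixes q c mun mum :: real and Pn Pm s1p s2p tp :: "real poly" and \<rho> :: "real \<Rightarrow> real"
  assumes q: "0 < q" "q < 1" and c: "c \<noteq> 0" and mu: "mun \<noteq> mum"
    and S2: "\<forall>x. poly s2p x = q * (poly s1p x + (1 - 1/q) * x * poly tp x)"
    and eign: "\<forall>x. poly s1p x * poly (Dqp (1/q) (Dqp q Pn)) x + poly tp x * poly (Dqp q Pn) x = mun * poly Pn x"
    and eigm: "\<forall>x. poly s1p x * poly (Dqp (1/q) (Dqp q Pm)) x + poly tp x * poly (Dqp q Pm) x = mum * poly Pm x"
    and pear: "\<forall>j. \<rho> (q ^ j * c) * poly s1p (q ^ j * c) = \<rho> (q ^ j * c / q) * poly s2p (q ^ j * c / q) / q"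
    and zero: "\<rho> (c / q) = 0"
    and lim: "(\<lambda>j. \<rho> (q ^ j * c)) \<longlonglongrightarrow> 1"
  shows "(\<lambda>j. q ^ j * (poly Pn (q ^ j * c) * poly Pm (q ^ j * c) * \<rho> (q ^ j * c))) sums
          ((poly s2p 0 / q * (poly Pm 0 * poly (Dqp q Pn) 0 - poly Pn 0 * poly (Dqp q Pm) 0))
           / ((mun - mum) * (1 - 1/q) * c))"
proof -
  have q1: "q \<noteq> 1" "1/q \<noteq> 1" using q by auto
  define W where "W y = \<rho> y * poly s2p y / q * (poly Pm y * poly (Dqp q Pn) y - poly Pn y * poly (Dqp q Pm) y)" for y
  define U where "U j = W (q ^ j * c / q)" for j
  define Lv where "Lv = poly s2p 0 / q * (poly Pm 0 * poly (Dqp q Pn) 0 - poly Pn 0 * poly (Dqp q Pm) 0)"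
  define K where "K = (mun - mum) * (1 - 1/q) * c"
  have "1 - 1/q \<noteq> 0" using q by simp
  then have K: "K \<noteq> 0" using c mu by (simp add: K_def)
  have key: "q ^ j * (poly Pn (q ^ j * c) * poly Pm (q ^ j * c) * \<rho> (q ^ j * c)) * K = U (Suc j) - U j" for j
  proof -
    define x where "x = q ^ j * c"
    have x: "x \<noteq> 0" using q c by (simp add: x_def)
    have Usuc: "U (Suc j) = W x" using q by (simp add: U_def x_def)
    have Uj: "U j = W (x / q)" by (simp add: U_def x_def)
    have qx: "q * (x / q) = x" "1 / q * x = x / q" using q by auto
    have dq: "poly (Dqp (1/q) r) x = (poly r x - poly r (x / q)) / ((1 - 1/q) * x)" for r
      using poly_Dqp'[OF q1(2) x, of r] qx by simp
    have xq: "x / q \<noteq> 0" using x q by simp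
    have gy: "poly (Dqp q r) (x / q) = (poly r (x / q) - poly r x) / ((1 - q) * (x / q))" for r
      using poly_Dqp'[OF q1(1) xq, of r] qx by simp
    have en: "poly s1p x * ((poly (Dqp q Pn) x - poly (Dqp q Pn) (x / q)) / ((1 - 1/q) * x)) + poly tp x * poly (Dqp q Pn) x = mun * poly Pn x"
      using eign[rule_format, of x] unfolding dq .
    have em: "poly s1p x * ((poly (Dqp q Pm) x - poly (Dqp q Pm) (x / q)) / ((1 - 1/q) * x)) + poly tp x * poly (Dqp q Pm) x = mum * poly Pm x"
      using eigm[rule_format, of x] unfolding dq .
    have pr: "\<rho> x * poly s1p x = \<rho> (x / q) * poly s2p (x / q) / q"
      using pear[rule_format, of j] unfolding x_def .
    have pw: "(mun - mum) * \<rho> x * ((1 - 1/q) * x) * poly Pn x * poly Pm x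
         = \<rho> x * poly s2p x / q * (poly Pm x * poly (Dqp q Pn) x - poly Pn x * poly (Dqp q Pm) x)
           - (\<rho> (x/q) * poly s2p (x/q) / q) * (poly Pm (x/q) * poly (Dqp q Pn) (x/q) - poly Pn (x/q) * poly (Dqp q Pm) (x/q))"
      by (rule pointwise_alg[OF q x en em gy[of Pn] gy[of Pm] pr S2[rule_format]])
    have "q ^ j * (poly Pn x * poly Pm x * \<rho> x) * K = (mun - mum) * \<rho> x * ((1 - 1/q) * x) * poly Pn x * poly Pm x"
      using q by (simp add: K_def x_def field_simps)
    also have "\<dots> = W x - W (x / q)" unfolding pw W_def by simp
    finally show ?thesis unfolding Usuc Uj x_def .
  qed
  have "(\<lambda>j. W (q ^ j * c)) \<longlonglongrightarrow> 1 * poly s2p 0 / q * (poly Pm 0 * poly (Dqp q Pn) 0 - poly Pn 0 * poly (Dqp q Pm) 0)"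
  proof -
    have "(\<lambda>j. q ^ j * c) \<longlonglongrightarrow> 0 * c"
      by (intro tendsto_mult LIMSEQ_power_zero tendsto_const) (use q in auto)
    then have z: "(\<lambda>j. q ^ j * c) \<longlonglongrightarrow> 0" by simp
    show ?thesis unfolding W_def
      by (intro tendsto_intros lim z) (use q in auto)
  qed
  then have "(\<lambda>j. U (Suc j)) \<longlonglongrightarrow> Lv" using q by (simp add: U_def Lv_def)
  then have "U \<longlonglongrightarrow> Lv" by (rule LIMSEQ_imp_Suc)
  then have "(\<lambda>j. U (Suc j) - U j) sums (Lv - U 0)" by (rule telescope_sums)
  moreover have "U 0 = 0" by (simp add: U_def W_def zero)
  ultimately have "(\<lambda>j. q ^ j * (poly Pn (q ^ j * c) * poly Pm (q ^ j * c) * \<rho> (q ^ j * c)) * K) sums Lv"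
    by (simp add: key)
  then have "(\<lambda>j. q ^ j * (poly Pn (q ^ j * c) * poly Pm (q ^ j * c) * \<rho> (q ^ j * c)) * K / K) sums (Lv / K)"
    by (rule sums_divide)
  then have "(\<lambda>j. q ^ j * (poly Pn (q ^ j * c) * poly Pm (q ^ j * c) * \<rho> (q ^ j * c))) sums (Lv / K)"
    by (simp only: nonzero_mult_div_cancel_right[OF K])
  then show ?thesis by (simp only: Lv_def K_def)
qed

lemma lt1_pow: "0 < q \<Longrightarrow> q < (1::real) \<Longrightarrow> \<alpha> < 1 \<Longrightarrow> \<alpha> * q ^ j < 1"
proof (cases "\<alpha> \<le> 0")
  case True
  assume "0 < q"
  then have "\<alpha> * q ^ j \<le> 0" using True by (simp add: mult_nonpos_nonneg)
  then show ?thesis by simp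
next
  case False
  assume q: "0 < q" "q < 1" and a: "\<alpha> < 1"
  have "q ^ j \<le> 1" using q by (simp add: power_le_one)
  then have "\<alpha> * q ^ j \<le> \<alpha>" using False by (simp add: mult_left_le)
  then show ?thesis using a by simp
qed

lemma rho4:
  assumes q: "0 < q" "q < (1::real)" and a: "\<alpha>1 < 1" "\<alpha>2 < 1" "\<alpha>3 < 1" "\<alpha>4 < 1"
  defines "F \<equiv> \<lambda>j. qpoch_inf q (\<alpha>1 * q ^ j) * qpoch_inf q (\<alpha>2 * q ^ j) /
                  (qpoch_inf q (\<alpha>3 * q ^ j) * qpoch_inf q (\<alpha>4 * q ^ j))"
  shows "\<forall>j. F j > 0" "F \<longlonglongrightarrow> 1"
proof -
  show "\<forall>j. F j > 0"
    using qp_pos[OF q lt1_pow[OF q a(1)]] qp_pos[OF q lt1_pow[OF q a(2)]]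
          qp_pos[OF q lt1_pow[OF q a(3)]] qp_pos[OF q lt1_pow[OF q a(4)]]
    by (simp add: F_def)
  have "F \<longlonglongrightarrow> 1 * 1 / (1 * 1)"
    unfolding F_def by (intro tendsto_intros qp_lim q a) simp
  then show "F \<longlonglongrightarrow> 1" by simp
qed

lemma pos_sum:
  fixes P :: "real poly"
  assumes q: "0 < q" "q < (1::real)" and F: "\<forall>j. F j > 0" "F \<longlonglongrightarrow> 1" and P: "P \<noteq> 0" and c: "c \<noteq> 0"
  shows "summable (\<lambda>j. q ^ j * (poly P (q ^ j * c) * poly P (q ^ j * c) * F j))"
        "0 < (\<Sum>j. q ^ j * (poly P (q ^ j * c) * poly P (q ^ j * c) * F j))"
proof -
  have "(\<lambda>j. poly P (q ^ j * c) * poly P (q ^ j * c) * F j) \<longlonglongrightarrow> poly P 0 * poly P 0 * 1"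
    by (intro tendsto_intros tendsto_poly_qpow q F(2))
  then have "Bseq (\<lambda>j. poly P (q ^ j * c) * poly P (q ^ j * c) * F j)"
    by (intro convergent_imp_Bseq convergentI)
  then obtain K where K: "K > 0" "\<forall>j. norm (poly P (q ^ j * c) * poly P (q ^ j * c) * F j) \<le> K"
    by (rule BseqE)
  show sm: "summable (\<lambda>j. q ^ j * (poly P (q ^ j * c) * poly P (q ^ j * c) * F j))"
  proof (rule summable_comparison_test)
    show "summable (\<lambda>j. K * q ^ j)" using q by (intro summable_mult summable_geometric) auto
    show "\<exists>N. \<forall>n\<ge>N. norm (q ^ n * (poly P (q ^ n * c) * poly P (q ^ n * c) * F n)) \<le> K * q ^ n"
    proof (intro exI allI impI)
      fix n :: nat
      have "norm (q ^ n * (poly P (q ^ n * c) * poly P (q ^ n * c) * F n))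
            = q ^ n * norm (poly P (q ^ n * c) * poly P (q ^ n * c) * F n)"
        using q by (simp add: abs_mult)
      also have "\<dots> \<le> q ^ n * K" using K q by (intro mult_left_mono) auto
      finally show "norm (q ^ n * (poly P (q ^ n * c) * poly P (q ^ n * c) * F n)) \<le> K * q ^ n"
        by (simp add: mult.commute)
    qed
  qed
  have "\<exists>j. poly P (q ^ j * c) \<noteq> 0"
  proof (rule ccontr)
    assume "\<not> ?thesis"
    then have "range (\<lambda>j. q ^ j * c) \<subseteq> {x. poly P x = 0}" by auto
    moreover have "inj (\<lambda>j::nat. q ^ j * c)"
    proof (rule injI)
      fix i j :: nat assume "q ^ i * c = q ^ j * c"
      then have "q ^ i = q ^ j" using c by simp
      then show "i = j" using q
        by (metis linorder_neqE_nat power_strict_decreasing_iff less_irrefl)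
    qed
    then have "infinite (range (\<lambda>j. q ^ j * c))"
      using finite_imageD by blast
    ultimately show False using poly_roots_finite[OF P] finite_subset by blast
  qed
  then obtain i where i: "poly P (q ^ i * c) \<noteq> 0" by blast
  show "0 < (\<Sum>j. q ^ j * (poly P (q ^ j * c) * poly P (q ^ j * c) * F j))"
  proof (rule suminf_pos2[OF sm])
    show "0 \<le> q ^ n * (poly P (q ^ n * c) * poly P (q ^ n * c) * F n)" for n
    proof -
      have a: "0 \<le> poly P (q ^ n * c) * poly P (q ^ n * c)" by simp
      have "0 \<le> F n" using F(1) less_imp_le by blast
      then have "0 \<le> poly P (q ^ n * c) * poly P (q ^ n * c) * F n" by (rule mult_nonneg_nonneg[OF a])
      then show ?thesis using q by simp
    qed
    show "0 < q ^ i * (poly P (q ^ i * c) * poly P (q ^ i * c) * F i)"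
    proof -
      have a: "0 < poly P (q ^ i * c) * poly P (q ^ i * c)" using i by (metis not_real_square_gt_zero)
      have "0 < F i" using F(1) by blast
      then have "0 < poly P (q ^ i * c) * poly P (q ^ i * c) * F i" by (rule mult_pos_pos[OF a])
      then show ?thesis using q by simp
    qed
  qed
qed

lemma pearson_aux:
  fixes X d a b q A B a2 b2 n u :: real
  assumes "X \<noteq> 0" "d \<noteq> 0" "a \<noteq> 0" "b \<noteq> 0" "q \<noteq> 0" "B * a2 * b2 = q * A * a * b"
  shows "n / d * (A * u) = (u / (a * b) * n / (X * d)) * (B * (a2 * b2 * X)) / q"
proof -
  have "(u / (a * b) * n / (X * d)) * (B * (a2 * b2 * X)) / q = (u * n) * (B * a2 * b2) / (a * b * d * q) * (X / X)"
    by (simp add: field_simps)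
  also have "\<dots> = (u * n) * (q * A * a * b) / (a * b * d * q)" using assms by simp
  also have "\<dots> = n / d * (A * u)" using assms by (simp add: field_simps)
  finally show ?thesis by simp
qed

lemma pearson:
  fixes q a b a2 b2 A B y :: real
  assumes q: "0 < q" "q < 1" and nz: "a \<noteq> 0" "b \<noteq> 0" "a2 \<noteq> 0" "b2 \<noteq> 0"
    and y: "y \<noteq> a2" "y \<noteq> b2" and AB: "B * a2 * b2 = q * A * a * b"
  defines "rho \<equiv> \<lambda>x. qpoch_inf q (q * x / a) * qpoch_inf q (q * x / b) / (qpoch_inf q (x / a2) * qpoch_inf q (x / b2))"
  shows "rho (q * y) * (A * (q * y - a) * (q * y - b)) = rho y * (B * (y - a2) * (y - b2)) / q"
proof -
  define n where "n = qpoch_inf q (q * (q * y) / a) * qpoch_inf q (q * (q * y) / b)"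
  define d where "d = qpoch_inf q (q * y / a2) * qpoch_inf q (q * y / b2)"
  have N: "qpoch_inf q (q * y / a) * qpoch_inf q (q * y / b) = (1 - q * y / a) * (1 - q * y / b) * n"
    using qp_rec[OF q, of "q * y / a"] qp_rec[OF q, of "q * y / b"] by (simp add: n_def)
  have D: "qpoch_inf q (y / a2) * qpoch_inf q (y / b2) = (1 - y / a2) * (1 - y / b2) * d"
    using qp_rec[OF q, of "y / a2"] qp_rec[OF q, of "y / b2"] by (simp add: d_def)
  have r1: "rho (q * y) = n / d" by (simp add: rho_def n_def d_def)
  have r2: "rho y = (1 - q * y / a) * (1 - q * y / b) * n / ((1 - y / a2) * (1 - y / b2) * d)"
    by (simp add: rho_def N D)
  have f1: "1 - y / a2 \<noteq> 0" "1 - y / b2 \<noteq> 0" using y nz by (auto simp: field_simps)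
  show ?thesis
  proof (cases "d = 0")
    case True then show ?thesis by (simp add: r1 r2)
  next
    case False
    have e1: "(1 - q * y / a) * (1 - q * y / b) = (q * y - a) * (q * y - b) / (a * b)"
      using nz by (simp add: field_simps)
    have e2: "(y - a2) * (y - b2) = a2 * b2 * ((1 - y / a2) * (1 - y / b2))"
      using nz by (simp add: field_simps)
    have X: "(1 - y / a2) * (1 - y / b2) \<noteq> 0" using f1 by simp
    have "rho (q * y) * (A * (q * y - a) * (q * y - b)) = n / d * (A * ((q * y - a) * (q * y - b)))"
      unfolding r1 by (simp add: mult.assoc)
    also have "\<dots> = ((q * y - a) * (q * y - b) / (a * b) * n / ((1 - y / a2) * (1 - y / b2) * d)) * (B * (a2 * b2 * ((1 - y / a2) * (1 - y / b2)))) / q"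
      by (rule pearson_aux[OF X False nz(1,2)]) (use q AB in auto)
    also have "\<dots> = rho y * (B * (y - a2) * (y - b2)) / q"
      unfolding r2 e1 by (simp add: e2 mult.assoc)
    finally show ?thesis .
  qed
qed

lemma aux2:
  fixes D1 D2 s X Y w :: real
  assumes "D1 \<noteq> 0" "D2 \<noteq> 0"
  shows "s * (X / D1) * (Y / D2) + s * w / D2 * (X / D1) = s * X / (D1 * D2) * (Y + w)"
  using assms by (simp add: field_simps)

lemma mu_closed:
  assumes q: "0 < q" "q < 1" and s: "sC \<noteq> 0" and u: "u = 1 + (1 - 1/q) * tB / sC"
  shows "mu q sC tB k = sC * q * ((1 - q ^ k) * (q / q ^ k - u)) / (1 - q)^2"
proof (cases k)
  case 0 then show ?thesis by (simp add: mu_def)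
next
  case (Suc j)
  define v where "v = q ^ j"
  have v: "v > 0" using q by (simp add: v_def)
  have h1: "qn q (Suc j) = (1 - q * v) / (1 - q)" by (simp add: qn_def v_def)
  have h2: "qn (1/q) j = (1 - 1 / v) / (1 - 1/q)" by (simp add: qn_def v_def power_one_over)
  have h3: "tB = sC * (u - 1) / (1 - 1/q)" using u s q by (simp add: field_simps)
  have h4: "q ^ k = q * v" by (simp add: Suc v_def)
  have "mu q sC tB k = sC * ((1 - q * v) / (1 - q)) * ((1 - 1 / v) / (1 - 1/q)) + sC * (u - 1) / (1 - 1/q) * ((1 - q * v) / (1 - q))"
    unfolding mu_def Suc h1 h3 by (simp add: h2)
  also have "\<dots> = sC * q * ((1 - q * v) * (q / (q * v) - u)) / (1 - q)^2"
  proof -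
    have nz: "1 - q \<noteq> 0" "q \<noteq> 0" "v \<noteq> 0" using q v by auto
    have h: "1 - 1/q = - (1 - q) / q" using q by (simp add: field_simps)
    have d2: "1 - 1/q \<noteq> 0" using q by simp
    have A: "sC * ((1 - q * v) / (1 - q)) * ((1 - 1 / v) / (1 - 1/q)) + sC * (u - 1) / (1 - 1/q) * ((1 - q * v) / (1 - q))
        = sC * (1 - q * v) / ((1 - q) * (1 - 1/q)) * ((1 - 1 / v) + (u - 1))"
      by (rule aux2[OF nz(1) d2])
    have B: "(1 - q) * (1 - 1/q) = - ((1 - q)^2 / q)" using nz by (simp add: field_simps power2_eq_square)
    have C: "q / (q * v) = 1 / v" using nz by simp
    show ?thesis unfolding A B C using nz by (simp add: field_simps)
  qed
  finally show ?thesis by (simp add: h4)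
qed

lemma g_mono:
  assumes q: "0 < q" "q < (1::real)" and u: "u < 1" and kn: "k < n"
  shows "(1 - q ^ k) * (q / q ^ k - u) < (1 - q ^ n) * (q / q ^ n - u)"
proof -
  define w1 where "w1 = q ^ k"
  define w2 where "w2 = q ^ n"
  have w1: "0 < w1" "w1 \<le> 1" using q by (auto simp: w1_def power_le_one)
  have w2: "0 < w2" using q by (simp add: w2_def)
  have "w2 \<le> q ^ Suc k" unfolding w2_def using q kn by (intro power_decreasing) auto
  then have w21: "w2 \<le> q * w1" by (simp add: w1_def)
  have lt: "w2 < w1" using q kn by (simp add: w1_def w2_def)
  have "w1 * w2 \<le> w1 * (q * w1)" using w1 w21 by (intro mult_left_mono) auto
  also have "\<dots> = q * (w1 * w1)" by simp
  also have "\<dots> \<le> q"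
  proof -
    have "w1 * w1 \<le> 1" using w1 by (intro mult_le_one) auto
    then show ?thesis using q by (simp add: mult_left_le)
  qed
  finally have p: "w1 * w2 \<le> q" .
  have "0 < w1 * w2" using w1 w2 by simp
  then have "1 \<le> q / (w1 * w2)" using p by (simp add: le_divide_eq)
  then have pos: "0 < q / (w1 * w2) - u" using u by simp
  have "(1 - w2) * (q / w2 - u) - (1 - w1) * (q / w1 - u) = (w1 - w2) * (q / (w1 * w2) - u)"
  proof -
    have "w1 \<noteq> 0" "w2 \<noteq> 0" using w1 w2 by auto
    then show ?thesis by (simp add: field_simps)
  qed
  also have "\<dots> > 0" using lt pos by simp
  finally show ?thesis by (simp add: w1_def w2_def)
qed

lemma mu_distinct:
  assumes q: "0 < q" "q < 1" and s: "sC \<noteq> 0" and u: "u = 1 + (1 - 1/q) * tB / sC" "u < 1"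
    and kn: "k < n"
  shows "mu q sC tB k \<noteq> mu q sC tB n"
proof
  assume "mu q sC tB k = mu q sC tB n"
  then have "sC * q * ((1 - q ^ k) * (q / q ^ k - u)) / (1 - q)^2 = sC * q * ((1 - q ^ n) * (q / q ^ n - u)) / (1 - q)^2"
    using mu_closed[OF q s u(1)] by simp
  then have "(1 - q ^ k) * (q / q ^ k - u) = (1 - q ^ n) * (q / q ^ n - u)"
    using s q by (simp only: divide_cancel_right mult_left_cancel mult_cancel_left) simp
  then show False using g_mono[OF q u(2) kn] by simp
qed

lemma lambda_mu:
  assumes q: "0 < q" "q < 1"
  shows "qEHT_lambda q \<sigma>1 \<tau> k = - mu q (coeff \<sigma>1 2) (coeff \<tau> 1) k"
proof (cases k)
  case 0 then show ?thesis by (simp add: qEHT_lambda_def mu_def qnum_def)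
next
  case (Suc j)
  have "int k - 1 = int j" by (simp add: Suc)
  then have "qnum (1/q) (int k - 1) = qn (1/q) j" by (simp add: qnum_nat)
  moreover have "dd0 \<sigma>1 = 2 * coeff \<sigma>1 2"
    by (simp add: dd0_def poly_0_coeff_0 coeff_pderiv numeral_2_eq_2)
  moreover have "poly (pderiv \<tau>) 0 = coeff \<tau> 1"
    by (simp add: poly_0_coeff_0 coeff_pderiv)
  moreover have "qnum q (int k) = qn q k" by (rule qnum_nat)
  moreover have "k - 1 = j" by (simp add: Suc)
  ultimately show ?thesis
    unfolding qEHT_lambda_def mu_def by (simp add: algebra_simps)
qed

lemma orth_aux:
  fixes a b q L K :: real
  assumes "a \<noteq> 0" "b \<noteq> 0"
  shows "(1 - q) * b * (L / (K * b)) + (1 - q) * (- a) * (L / (K * a)) = 0"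
  using assms by simp

theorem theorem4p2:
  fixes q a1 b1 a2 b2 :: real and \<sigma>1 \<tau> :: "real poly"
  assumes q: "0 < q" "q < 1"
    and deg_s1: "degree \<sigma>1 \<le> 2"
    and deg_tau: "degree \<tau> \<le> 1" and tau1: "poly (pderiv \<tau>) 0 \<noteq> 0"
    and s1_ne: "dd0 \<sigma>1 \<noteq> 0" and s2_ne: "dd0 (sigma2 q \<sigma>1 \<tau>) \<noteq> 0"
    and s1_fac: "\<forall>x. poly \<sigma>1 x = 1 / 2 * dd0 \<sigma>1 * (x - a1) * (x - b1)"
    and s2_fac: "\<forall>x. poly (sigma2 q \<sigma>1 \<tau>) x = 1 / 2 * dd0 (sigma2 q \<sigma>1 \<tau>) * (x - a2) * (x - b2)"
    and zeros: "a2 < a1" "a1 < 0" "0 < b1" "b1 < b2"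
    and Lam: "0 < q\<^sup>2 * (q powi (-2) * (1 + (1 - 1 / q) * poly (pderiv \<tau>) 0 / (1 / 2 * dd0 \<sigma>1)))"
             "q\<^sup>2 * (q powi (-2) * (1 + (1 - 1 / q) * poly (pderiv \<tau>) 0 / (1 / 2 * dd0 \<sigma>1))) < 1"
  shows "\<exists>(P :: nat \<Rightarrow> real poly) (d2 :: nat \<Rightarrow> real).
           (\<forall>n. degree (P n) = n
                \<and> solves_qEHT q \<sigma>1 \<tau> (qEHT_lambda q \<sigma>1 \<tau> n) (poly (P n))
                \<and> d2 n \<noteq> 0)
         \<and> (\<forall>m n. jackson_int q a1 b1
                 (\<lambda>x. poly (P n) x * poly (P m) x *
                      (qpoch_inf q (q * x / a1) * qpoch_inf q (q * x / b1)
                       / (qpoch_inf q (x / a2) * qpoch_inf q (x / b2))))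
               = (if m = n then d2 n else 0))"
proof -
  have q1: "q \<noteq> 1" "1/q \<noteq> 1" "q \<noteq> 0" using q by auto
  define sA where "sA = coeff \<sigma>1 0"
  define sB where "sB = coeff \<sigma>1 1"
  define sC where "sC = coeff \<sigma>1 2"
  define tA where "tA = coeff \<tau> 0"
  define tB where "tB = coeff \<tau> 1"
  have hs: "\<sigma>1 = [:sA, sB, sC:]"
  proof (rule poly_eqI)
    fix n :: nat
    consider "n = 0" | "n = 1" | "n = 2" | "n \<ge> 3" by linarith
    then show "coeff \<sigma>1 n = coeff [:sA, sB, sC:] n"
    proof cases
      case 4
      then have "coeff \<sigma>1 n = 0" using deg_s1 by (intro coeff_eq_0) simp
      moreover have "n = Suc (Suc (Suc (n - 3)))" using 4 by arith
      ultimately show ?thesis by (metis coeff_pCons_Suc coeff_0)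
    qed (auto simp: sA_def sB_def sC_def numeral_2_eq_2)
  qed
  have ht: "\<tau> = [:tA, tB:]"
  proof (rule poly_eqI)
    fix n :: nat
    consider "n = 0" | "n = 1" | "n \<ge> 2" by linarith
    then show "coeff \<tau> n = coeff [:tA, tB:] n"
    proof cases
      case 3
      then have "coeff \<tau> n = 0" using deg_tau by (intro coeff_eq_0) simp
      moreover have "n = Suc (Suc (n - 2))" using 3 by arith
      ultimately show ?thesis by (metis coeff_pCons_Suc coeff_0)
    qed (auto simp: tA_def tB_def)
  qed
  have dd0s: "dd0 \<sigma>1 = 2 * sC"
    by (simp add: dd0_def poly_0_coeff_0 coeff_pderiv numeral_2_eq_2 sC_def)
  have t1: "poly (pderiv \<tau>) 0 = tB"
    by (simp add: poly_0_coeff_0 coeff_pderiv tB_def)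
  have sC: "sC \<noteq> 0" using s1_ne dd0s by simp
  define u where "u = 1 + (1 - 1/q) * tB / sC"
  have qq: "q\<^sup>2 * (q powi (-2) * X) = X" for X
    using q by (simp add: power_int_minus field_simps)
  have u: "0 < u" "u < 1" using Lam unfolding qq t1 dd0s by (simp_all add: u_def)
  have mudist: "mu q sC tB k \<noteq> mu q sC tB n" if "k \<noteq> n" for k n
  proof (cases "k < n")
    case True then show ?thesis using mu_distinct[OF q sC u_def u(2)] by blast
  next
    case False then have "n < k" using that by simp
    then show ?thesis using mu_distinct[OF q sC u_def u(2)] by metis
  qed
  have "\<forall>n. \<exists>P. degree P = n \<and> coeff P n = 1 \<and> Lop q [:sA, sB, sC:] [:tA, tB:] P = smult (mu q sC tB n) P"
  proof
    fix n :: nat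
    show "\<exists>P. degree P = n \<and> coeff P n = 1 \<and> Lop q [:sA, sB, sC:] [:tA, tB:] P = smult (mu q sC tB n) P"
      by (rule eigen_exists) (use mudist in auto)
  qed
  then obtain P where P: "\<And>n. degree (P n) = n" "\<And>n. coeff (P n) n = 1"
      "\<And>n. Lop q [:sA, sB, sC:] [:tA, tB:] (P n) = smult (mu q sC tB n) (P n)"
    by metis
  have Pnz: "P n \<noteq> 0" for n using P(2)[of n] by auto
  have eig: "\<forall>x. poly \<sigma>1 x * poly (Dqp (1/q) (Dqp q (P n))) x + poly \<tau> x * poly (Dqp q (P n)) x = mu q sC tB n * poly (P n) x" for n
  proof
    fix x
    have "poly (Lop q [:sA, sB, sC:] [:tA, tB:] (P n)) x = poly (smult (mu q sC tB n) (P n)) x"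
      using P(3) by simp
    then show "poly \<sigma>1 x * poly (Dqp (1/q) (Dqp q (P n))) x + poly \<tau> x * poly (Dqp q (P n)) x = mu q sC tB n * poly (P n) x"
      unfolding Lop_def hs[symmetric] ht[symmetric] by simp
  qed
  have solves: "solves_qEHT q \<sigma>1 \<tau> (qEHT_lambda q \<sigma>1 \<tau> n) (poly (P n))" for n
    unfolding solves_qEHT_def qD_poly[OF q1(1)] qD_poly[OF q1(2)] lambda_mu[OF q]
    using eig[of n] by (simp add: sC_def tB_def)
  define rho where "rho = (\<lambda>x. qpoch_inf q (q * x / a1) * qpoch_inf q (q * x / b1) / (qpoch_inf q (x / a2) * qpoch_inf q (x / b2)))"
  have nz: "a1 \<noteq> 0" "b1 \<noteq> 0" "a2 \<noteq> 0" "b2 \<noteq> 0" using zeros by auto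
  define A where "A = 1 / 2 * dd0 \<sigma>1"
  define B where "B = 1 / 2 * dd0 (sigma2 q \<sigma>1 \<tau>)"
  have S1: "poly \<sigma>1 x = A * (x - a1) * (x - b1)" for x using s1_fac by (simp add: A_def)
  have S2f: "poly (sigma2 q \<sigma>1 \<tau>) x = B * (x - a2) * (x - b2)" for x using s2_fac by (simp add: B_def)
  have S2: "\<forall>x. poly (sigma2 q \<sigma>1 \<tau>) x = q * (poly \<sigma>1 x + (1 - 1/q) * x * poly \<tau> x)"
    by (simp add: sigma2_def)
  have AB: "B * a2 * b2 = q * A * a1 * b1"
  proof -
    have "poly (sigma2 q \<sigma>1 \<tau>) 0 = q * poly \<sigma>1 0" using S2 by simp
    then show ?thesis unfolding S1 S2f by simp
  qed
  have qp1: "qpoch_inf q 1 = 0" using qp_rec[OF q, of 1] by simp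
  have zero: "rho (c / q) = 0" if "c = a1 \<or> c = b1" for c
  proof -
    have "q * (c / q) / c = 1" using that nz q1 by auto
    then show ?thesis using that qp1 by (auto simp: rho_def)
  qed
  have pear: "\<forall>j. rho (q ^ j * c) * poly \<sigma>1 (q ^ j * c) = rho (q ^ j * c / q) * poly (sigma2 q \<sigma>1 \<tau>) (q ^ j * c / q) / q"
    if c: "c = a1 \<or> c = b1" for c
  proof
    fix j
    show "rho (q ^ j * c) * poly \<sigma>1 (q ^ j * c) = rho (q ^ j * c / q) * poly (sigma2 q \<sigma>1 \<tau>) (q ^ j * c / q) / q"
    proof (cases j)
      case 0
      have "poly \<sigma>1 c = 0" using c S1 by auto
      then show ?thesis using zero[OF c] 0 by simp
    next
      case (Suc i)
      define y where "y = q ^ i * c"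
      have e1: "q ^ j * c = q * y" by (simp add: Suc y_def)
      have e2: "q ^ j * c / q = y" using q1 by (simp add: Suc y_def)
      have yb: "y \<noteq> a2 \<and> y \<noteq> b2"
      proof -
        have qi: "0 < q ^ i" "q ^ i \<le> 1" using q by (auto simp: power_le_one)
        show ?thesis
        proof (cases "c = b1")
          case True
          have "0 < y" using qi zeros by (simp add: y_def True)
          moreover have "y \<le> b1" using qi zeros by (simp add: y_def True mult_left_le_one_le)
          ultimately show ?thesis using zeros by auto
        next
          case False
          then have ca: "c = a1" using c by auto
          have "y < 0" using qi zeros by (simp add: y_def ca mult_pos_neg)
          moreover have "a1 \<le> y"
          proof -
            have "q ^ i * (- a1) \<le> - a1" using qi zeros by (simp add: mult_left_le_one_le)
            then show ?thesis by (simp add: y_def ca)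
          qed
          ultimately show ?thesis using zeros by auto
        qed
      qed
      have "rho (q * y) * (A * (q * y - a1) * (q * y - b1)) = rho y * (B * (y - a2) * (y - b2)) / q"
        unfolding rho_def by (rule pearson[OF q nz _ _ AB]) (use yb in auto)
      then show ?thesis using q1 by (simp add: e1 S1 S2f)
    qed
  qed
  have Fb: "rho (q ^ j * b1) = qpoch_inf q ((q * b1 / a1) * q ^ j) * qpoch_inf q (q * q ^ j) /
                  (qpoch_inf q ((b1 / a2) * q ^ j) * qpoch_inf q ((b1 / b2) * q ^ j))" for j
  proof -
    have "q * (q ^ j * b1) / b1 = q * q ^ j" using nz by simp
    then show ?thesis by (simp add: rho_def mult_ac)
  qed
  have Fa: "rho (q ^ j * a1) = qpoch_inf q (q * q ^ j) * qpoch_inf q ((q * a1 / b1) * q ^ j) /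
                  (qpoch_inf q ((a1 / a2) * q ^ j) * qpoch_inf q ((a1 / b2) * q ^ j))" for j
  proof -
    have "q * (q ^ j * a1) / a1 = q * q ^ j" using nz by simp
    then show ?thesis by (simp add: rho_def mult_ac)
  qed
  have al: "q * b1 / a1 < 1" "b1 / a2 < 1" "b1 / b2 < 1" "q * a1 / b1 < 1" "a1 / a2 < 1" "a1 / b2 < 1"
  proof -
    have "q * b1 / a1 < 0" using q zeros by (intro divide_pos_neg) auto
    then show "q * b1 / a1 < 1" by simp
    have "b1 / a2 < 0" using q zeros by (intro divide_pos_neg) auto
    then show "b1 / a2 < 1" by simp
    show "b1 / b2 < 1" using zeros by (simp add: divide_less_eq)
    have "q * a1 / b1 < 0" using q zeros by (intro divide_neg_pos) (auto simp: mult_pos_neg)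
    then show "q * a1 / b1 < 1" by simp
    show "a1 / a2 < 1" using zeros by (simp add: divide_less_eq)
    have "a1 / b2 < 0" using zeros by (intro divide_neg_pos) auto
    then show "a1 / b2 < 1" by simp
  qed
  have rb: "\<forall>j. rho (q ^ j * b1) > 0" "(\<lambda>j. rho (q ^ j * b1)) \<longlonglongrightarrow> 1"
    using rho4[OF q al(1) q(2) al(2) al(3)] unfolding Fb[symmetric] by (simp_all add: mult.commute)
  have ra: "\<forall>j. rho (q ^ j * a1) > 0" "(\<lambda>j. rho (q ^ j * a1)) \<longlonglongrightarrow> 1"
    using rho4[OF q q(2) al(4) al(5) al(6)] unfolding Fa[symmetric] by (simp_all add: mult.commute)
  define d2 where "d2 n = jackson_int q a1 b1 (\<lambda>x. poly (P n) x * poly (P n) x * rho x)" for n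
  have d2nz: "d2 n \<noteq> 0" for n
  proof -
    have sb: "0 < (\<Sum>j. q ^ j * (poly (P n) (q ^ j * b1) * poly (P n) (q ^ j * b1) * rho (q ^ j * b1)))"
      by (rule pos_sum(2)[OF q rb Pnz nz(2)])
    have sa: "0 < (\<Sum>j. q ^ j * (poly (P n) (q ^ j * a1) * poly (P n) (q ^ j * a1) * rho (q ^ j * a1)))"
      by (rule pos_sum(2)[OF q ra Pnz nz(1)])
    have "0 < d2 n" unfolding d2_def jackson_int_def
      using sa sb q zeros by (intro add_pos_pos mult_pos_pos) auto
    then show ?thesis by simp
  qed
  have orth: "jackson_int q a1 b1 (\<lambda>x. poly (P n) x * poly (P m) x * rho x) = 0" if mn: "m \<noteq> n" for m n
  proof -
    have mu: "mu q sC tB n \<noteq> mu q sC tB m" using mudist mn by metis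
    let ?L = "poly (sigma2 q \<sigma>1 \<tau>) 0 / q * (poly (P m) 0 * poly (Dqp q (P n)) 0 - poly (P n) 0 * poly (Dqp q (P m)) 0)"
    have sumb: "(\<lambda>j. q ^ j * (poly (P n) (q ^ j * b1) * poly (P m) (q ^ j * b1) * rho (q ^ j * b1))) sums
          (?L / ((mu q sC tB n - mu q sC tB m) * (1 - 1/q) * b1))"
      by (rule side_sum[OF q nz(2) mu S2 eig eig pear zero rb(2)]) auto
    have suma: "(\<lambda>j. q ^ j * (poly (P n) (q ^ j * a1) * poly (P m) (q ^ j * a1) * rho (q ^ j * a1))) sums
          (?L / ((mu q sC tB n - mu q sC tB m) * (1 - 1/q) * a1))"
      by (rule side_sum[OF q nz(1) mu S2 eig eig pear zero ra(2)]) auto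
    show ?thesis unfolding jackson_int_def sums_unique[OF sumb, symmetric] sums_unique[OF suma, symmetric]
      by (rule orth_aux[OF nz(1,2)])
  qed
  show ?thesis
  proof (intro exI[of _ P] exI[of _ d2] conjI allI)
    fix n :: nat
    show "degree (P n) = n" by (rule P(1))
    show "solves_qEHT q \<sigma>1 \<tau> (qEHT_lambda q \<sigma>1 \<tau> n) (poly (P n))" by (rule solves)
    show "d2 n \<noteq> 0" by (rule d2nz)
  next
    fix m n
    show "jackson_int q a1 b1
                 (\<lambda>x. poly (P n) x * poly (P m) x *
                      (qpoch_inf q (q * x / a1) * qpoch_inf q (q * x / b1)
                       / (qpoch_inf q (x / a2) * qpoch_inf q (x / b2))))
               = (if m = n then d2 n else 0)"
      using orth[of m n] unfolding d2_def rho_def by auto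
  qed
qed

end
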